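(* Let $V:S^1\to\mathbb R$ be continuous and odd, $D>0$, and let $f\ge0$ be a ($\mathcal C^2$) stationary solution of (TP) with $\int_{S^1}f=1$. Then $f$ satisfies $D f'=-(V*f)f$ on $S^1$. With $C=\max V/D$, for all $\theta_1,\theta_2\in S^1$, $$f(\theta_1)e^{-C|\theta_1-\theta_2|}\le f(\theta_2)\le f(\theta_1)e^{C|\theta_1-\theta_2|},$$ where $|\theta_1-\theta_2|\le\tfrac12$ is the distance on $S^1$. Consequently $\max f/\min f\le e^{C/2}$, $\max f\le e^{C/2}$ and $\min f\ge e^{-C/2}$. If moreover $V\in\mathcal C^1$, then at any maximum point $\theta_{\max}$ of $f$, $f''(\theta_{\max})\ge-\frac{\max V'}{D}f(\theta_{\max})$, and at any minimum point $\theta_{\min}$, $f''(\theta_{\min})\le-\frac{\min V'}{D}f(\theta_{\min})$.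
   Context: $S^1=\mathbb R/\mathbb Z$; $(V*f)(\theta)=\int_{S^1}V(\theta-\psi)f(\psi)d\psi$. Equation (TP): $\partial_tf=D\partial_\theta^2f+\partial_\theta((V*f)f)$. A stationary solution is a time-independent solution, i.e. $Df''+((V*f)f)'=0$. *)

theory Defs
  imports "HOL-Analysis.Analysis"
begin

text \<open>Functions on S^1 = R/Z are represented as 1-periodic functions on the reals.\<close>

definition periodic1 :: "(real \<Rightarrow> real) \<Rightarrow> bool" where
  "periodic1 g \<longleftrightarrow> (\<forall>x. g (x + 1) = g x)"

definition s1_conv :: "(real \<Rightarrow> real) \<Rightarrow> (real \<Rightarrow> real) \<Rightarrow> real \<Rightarrow> real" where
  "s1_conv V f \<theta> = integral {0..1} (\<lambda>\<psi>. V (\<theta> - \<psi>) * f \<psi>)"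

definition s1_dist :: "real \<Rightarrow> real \<Rightarrow> real" where
  "s1_dist x y = \<bar>(x - y) - of_int (round (x - y))\<bar>"

end

theory Submission
  imports Defs
begin

lemma per_nat: assumes "periodic1 g" shows "g (x + real n) = g x"
proof (induction n)
  case (Suc n)
  have "g (x + real (Suc n)) = g ((x + real n) + 1)" by (simp add: algebra_simps)
  then show ?case using Suc assms by (simp add: periodic1_def)
qed simp

lemma per_int: assumes "periodic1 g" shows "g (x + of_int n) = g x"
proof (cases "n \<ge> 0")
  case True
  then show ?thesis using per_nat[OF assms, of x "nat n"] by simp
next
  case False
  then have "g (x + of_int n + real (nat (-n))) = g (x + of_int n)" using per_nat[OF assms] by blast
  then show ?thesis using False by simp
qed

lemma per_range: assumes "periodic1 g" shows "range g = g ` {0..1}"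
proof
  show "range g \<subseteq> g ` {0..1}"
  proof
    fix y assume "y \<in> range g"
    then obtain x where y: "y = g x" by auto
    have "g x = g ((x - of_int (floor x)) + of_int (floor x))" by simp
    also have "\<dots> = g (x - of_int (floor x))" by (rule per_int[OF assms])
    finally have gx: "g x = g (x - of_int (floor x))" .
    have "x - of_int (floor x) \<in> {0..1}"
      using frac_lt_1[of x] frac_ge_0[of x] by (auto simp: frac_def)
    then show "y \<in> g ` {0..1}" using y gx by blast
  qed
qed auto

lemma per_compact: assumes "periodic1 g" "continuous_on UNIV g"
  shows "compact (range g)"
proof -
  have "continuous_on {0..1} g" using assms(2) continuous_on_subset by blast
  then have "compact (g ` {0..1})" by (intro compact_continuous_image) auto
  then show ?thesis using per_range[OF assms(1)] by simp
qed

lemma per_bdd: assumes "periodic1 g" "continuous_on UNIV g"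
  shows "bdd_above (range g)" "bdd_below (range g)"
proof -
  have "bounded (range g)" using per_compact[OF assms] by (rule compact_imp_bounded)
  then show "bdd_above (range g)" "bdd_below (range g)"
    by (rule bounded_imp_bdd_above, rule bounded_imp_bdd_below)
qed

lemma per_max: assumes "periodic1 g" "continuous_on UNIV g"
  shows "\<exists>x. \<forall>y. g y \<le> g x"
proof -
  obtain x where "x \<in> {0..1}" "\<forall>y\<in>{0..1}. g y \<le> g x"
  proof -
    have c: "continuous_on {0..1::real} g" using assms(2) continuous_on_subset by blast
    show ?thesis using continuous_attains_sup[OF compact_Icc _ c] that by auto
  qed
  then have "\<forall>y. g y \<le> g x"
  proof (intro allI)
    fix y
    have "g y \<in> g ` {0..1}" using per_range[OF assms(1)] by blast
    then obtain z where "z \<in> {0..1}" "g y = g z" by blast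
    then show "g y \<le> g x" using \<open>\<forall>y\<in>{0..1}. g y \<le> g x\<close> by simp
  qed
  then show ?thesis by blast
qed

lemma per_min: assumes "periodic1 g" "continuous_on UNIV g"
  shows "\<exists>x. \<forall>y. g x \<le> g y"
proof -
  obtain x where "x \<in> {0..1}" "\<forall>y\<in>{0..1}. g x \<le> g y"
  proof -
    have c: "continuous_on {0..1::real} g" using assms(2) continuous_on_subset by blast
    show ?thesis using continuous_attains_inf[OF compact_Icc _ c] that by auto
  qed
  then have "\<forall>y. g x \<le> g y"
  proof (intro allI)
    fix y
    have "g y \<in> g ` {0..1}" using per_range[OF assms(1)] by blast
    then obtain z where "z \<in> {0..1}" "g y = g z" by blast
    then show "g x \<le> g y" using \<open>\<forall>y\<in>{0..1}. g x \<le> g y\<close> by simp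
  qed
  then show ?thesis by blast
qed

lemma aux_le1: "(D::real) > 0 \<Longrightarrow> X \<le> M * F \<Longrightarrow> - (M / D) * F \<le> - X / D"
  by (simp add: field_simps)

lemma aux_le2: "(D::real) > 0 \<Longrightarrow> M * F \<le> X \<Longrightarrow> - X / D \<le> - (M / D) * F"
  by (simp add: field_simps)

theorem mainTheorem10:
  fixes V f :: "real \<Rightarrow> real" and D :: real
  assumes V_cont: "continuous_on UNIV V"
    and V_per: "periodic1 V"
    and V_odd: "\<And>x. V (- x) = - V x"
    and D_pos: "D > 0"
    and f_per: "periodic1 f"
    and f_diff: "\<And>x. f differentiable (at x)"
    and f'_diff: "\<And>x. deriv f differentiable (at x)"
    and f''_cont: "continuous_on UNIV (deriv (deriv f))"
    and f_nonneg: "\<And>x. f x \<ge> 0"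
    and f_mass: "integral {0..1} f = 1"
    and stationary: "\<And>\<theta>. ((\<lambda>x. s1_conv V f x * f x) has_real_derivative
                              (- (D * deriv (deriv f) \<theta>))) (at \<theta>)"
  shows "(\<forall>\<theta>. D * deriv f \<theta> = - (s1_conv V f \<theta> * f \<theta>))
    \<and> (let C = Sup (range V) / D in
        (\<forall>\<theta>1 \<theta>2. f \<theta>1 * exp (- C * s1_dist \<theta>1 \<theta>2) \<le> f \<theta>2
                 \<and> f \<theta>2 \<le> f \<theta>1 * exp (C * s1_dist \<theta>1 \<theta>2))
        \<and> Sup (range f) / Inf (range f) \<le> exp (C / 2)
        \<and> Sup (range f) \<le> exp (C / 2)
        \<and> Inf (range f) \<ge> exp (- C / 2))
    \<and> ((\<forall>x. V differentiable (at x)) \<and> continuous_on UNIV (deriv V) \<longrightarrow>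
        (\<forall>\<theta>. (\<forall>x. f x \<le> f \<theta>) \<longrightarrow>
              deriv (deriv f) \<theta> \<ge> - (Sup (range (deriv V)) / D) * f \<theta>)
      \<and> (\<forall>\<theta>. (\<forall>x. f \<theta> \<le> f x) \<longrightarrow>
              deriv (deriv f) \<theta> \<le> - (Inf (range (deriv V)) / D) * f \<theta>))"
proof -
  define g where "g = s1_conv V f"
  define M where "M = Sup (range V)"
  have f1: "\<And>x. (f has_real_derivative deriv f x) (at x)"
    using f_diff DERIV_deriv_iff_real_differentiable by blast
  have f2: "\<And>x. (deriv f has_real_derivative deriv (deriv f) x) (at x)"
    using f'_diff DERIV_deriv_iff_real_differentiable by blast
  have fc: "continuous_on UNIV f"
    by (intro continuous_at_imp_continuous_on ballI DERIV_isCont[OF f1])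
  have f'c: "continuous_on UNIV (deriv f)"
    by (intro continuous_at_imp_continuous_on ballI DERIV_isCont[OF f2])
  have Vc2: "continuous_on UNIV (\<lambda>p::real\<times>real. V (fst p - snd p))"
    by (rule continuous_on_compose2[OF V_cont]) (auto intro!: continuous_intros)
  have Vc1: "\<And>c. continuous_on UNIV (\<lambda>y. V (c - y) * f y)"
    by (intro continuous_on_mult fc continuous_on_compose2[OF V_cont]) (auto intro!: continuous_intros)
  have Vi: "\<And>c. (\<lambda>y. V (c - y) * f y) integrable_on {0..1}"
    using Vc1 continuous_on_subset integrable_continuous_interval by blast
  define h where "h x = D * deriv f x + g x * f x" for x
  have hd: "\<And>x. (h has_real_derivative 0) (at x)"
  proof -
    fix x
    have "(h has_real_derivative (D * deriv (deriv f) x + - (D * deriv (deriv f) x))) (at x)"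
      unfolding h_def[abs_def] g_def
      by (intro DERIV_add DERIV_cmult f2 stationary)
    then show "(h has_real_derivative 0) (at x)" by simp
  qed
  have hconst: "\<And>x. h x = h 0" using DERIV_isconst_all hd by blast
  have intf': "(deriv f has_integral (f 1 - f 0)) {0..1}"
    by (rule fundamental_theorem_of_calculus)
       (auto simp: has_real_derivative_iff_has_vector_derivative[symmetric] intro: DERIV_subset[OF f1])
  have f10: "f 1 = f 0" using f_per unfolding periodic1_def by (metis add_0)
  have intf'0: "integral {0..1} (deriv f) = 0" using intf' f10 integral_unique by force
  have f'i: "deriv f integrable_on {0..1}" using intf' by blast
  have gf_eq: "\<And>x. g x * f x = h 0 - D * deriv f x" using hconst unfolding h_def by (metis add_diff_cancel_left')
  have "integral {0..1} (\<lambda>x. g x * f x) = integral {0..1} (\<lambda>x. h 0 - D * deriv f x)"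
    using gf_eq by simp
  also have "\<dots> = h 0"
    by (simp add: integrable_const_ivl integral_diff integrable_on_mult_right f'i intf'0)
  finally have Ih: "integral {0..1} (\<lambda>x. g x * f x) = h 0" .
  define F where "F x y = V (x - y) * f y * f x" for x y
  have Fc: "continuous_on (cbox (0,0) (1,1)) (\<lambda>(x,y). F x y)"
  proof -
    have "continuous_on UNIV (\<lambda>p::real\<times>real. V (fst p - snd p) * f (snd p) * f (fst p))"
      by (intro continuous_on_mult Vc2 continuous_on_compose2[OF fc]) (auto intro!: continuous_intros)
    then show ?thesis unfolding F_def case_prod_beta using continuous_on_subset by blast
  qed
  have sw: "integral (cbox 0 1) (\<lambda>x. integral (cbox 0 1) (F x)) =
      integral (cbox 0 1) (\<lambda>y. integral (cbox 0 1) (\<lambda>x. F x y))"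
    by (rule integral_swap_continuous[OF Fc])
  have Fneg: "\<And>x y. F x y = - F y x"
  proof -
    fix x y
    have "V (y - x) = - V (x - y)" using V_odd[of "x - y"] by simp
    then show "F x y = - F y x" unfolding F_def by simp
  qed
  have e: "\<And>y. (\<lambda>x. F x y) = (\<lambda>x. - F y x)" by (rule ext) (rule Fneg)
  have "integral {0..1} (\<lambda>x. integral {0..1} (F x)) = integral {0..1} (\<lambda>y. integral {0..1} (\<lambda>x. - F y x))"
    using sw by (simp only: cbox_interval e)
  also have "\<dots> = - integral {0..1} (\<lambda>y. integral {0..1} (F y))" by simp
  finally have I0: "integral {0..1} (\<lambda>x. integral {0..1} (F x)) = 0" by simp
  have "\<And>x. g x * f x = integral {0..1} (F x)"
    unfolding g_def s1_conv_def F_def by simp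
  then have "integral {0..1} (\<lambda>x. g x * f x) = 0" using I0 by simp
  then have h00: "h 0 = 0" using Ih by simp
  have part1: "\<And>\<theta>. D * deriv f \<theta> = - (g \<theta> * f \<theta>)" using gf_eq h00 by simp
  have Vbdd: "bdd_above (range V)" using per_bdd[OF V_per V_cont] by blast
  have VM: "\<And>x. V x \<le> M" unfolding M_def using Vbdd by (simp add: cSup_upper)
  have Vm: "\<And>x. - M \<le> V x" using VM V_odd by (metis minus_le_iff)
  have V0: "V 0 = 0" using V_odd[of 0] by simp
  have M0: "M \<ge> 0" using VM[of 0] V0 by simp
  have fi: "f integrable_on {0..1}" using fc continuous_on_subset integrable_continuous_interval by blast
  have gb: "\<And>\<theta>. \<bar>g \<theta>\<bar> \<le> M"
  proof -
    fix \<theta>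
    have "g \<theta> \<le> integral {0..1} (\<lambda>y. M * f y)"
      unfolding g_def s1_conv_def
      by (rule integral_le[OF Vi integrable_on_mult_right[OF fi]])
         (simp add: VM f_nonneg mult_right_mono)
    moreover have "integral {0..1} (\<lambda>y. - M * f y) \<le> g \<theta>"
      unfolding g_def s1_conv_def
      by (rule integral_le[OF integrable_on_mult_right[OF fi] Vi])
         (metis Vm f_nonneg mult_right_mono mult_minus_left)
    ultimately show "\<bar>g \<theta>\<bar> \<le> M" using f_mass by simp
  qed
  define C where "C = M / D"
  have C0: "C \<ge> 0" unfolding C_def using M0 D_pos by simp
  have fd: "\<And>x. \<bar>deriv f x\<bar> \<le> C * f x"
  proof -
    fix x
    have "deriv f x = - (g x * f x) / D" using part1[of x] D_pos by (simp add: field_simps)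
    then have "\<bar>deriv f x\<bar> = \<bar>g x\<bar> * f x / D" using f_nonneg[of x] D_pos by (simp add: abs_mult)
    also have "\<dots> \<le> M * f x / D"
      using gb[of x] f_nonneg[of x] D_pos by (simp add: divide_right_mono mult_right_mono)
    finally show "\<bar>deriv f x\<bar> \<le> C * f x" unfolding C_def by simp
  qed
  have grow: "\<And>s t. f t \<le> f s * exp (C * \<bar>t - s\<bar>)"
  proof -
    fix s t :: real
    show "f t \<le> f s * exp (C * \<bar>t - s\<bar>)"
    proof (cases "s \<le> t")
      case True
      have "f t * exp (- C * t) \<le> f s * exp (- C * s)"
      proof (rule DERIV_nonpos_imp_nonincreasing[OF True])
        fix x
        have "((\<lambda>x. f x * exp (- C * x)) has_real_derivative
            (deriv f x * exp (- C * x) + f x * (exp (- C * x) * (- C * 1)))) (at x)"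
          by (auto intro!: derivative_eq_intros f1)
        moreover have "deriv f x * exp (- C * x) + f x * (exp (- C * x) * (- C * 1)) \<le> 0"
        proof -
          have "deriv f x \<le> C * f x" using fd[of x] by simp
          then have "deriv f x * exp (- C * x) \<le> C * f x * exp (- C * x)"
            by (simp add: mult_right_mono)
          then show ?thesis by (simp add: algebra_simps)
        qed
        ultimately show "\<exists>y. ((\<lambda>x. f x * exp (- C * x)) has_real_derivative y) (at x) \<and> y \<le> 0"
          by blast
      qed
      then have le: "f t * exp (- C * t) \<le> f s * exp (- C * s)" .
      have "f t = f t * exp (- C * t) * exp (C * t)" by (simp add: mult.assoc flip: exp_add)
      also have "\<dots> \<le> f s * exp (- C * s) * exp (C * t)" by (rule mult_right_mono[OF le]) simp
      also have "\<dots> = f s * exp (- C * s + C * t)" by (simp add: mult.assoc flip: exp_add)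
      also have "- C * s + C * t = C * \<bar>t - s\<bar>" using True by (simp add: algebra_simps)
      finally show ?thesis .
    next
      case False
      then have ts: "t \<le> s" by simp
      have "f t * exp (C * t) \<le> f s * exp (C * s)"
      proof (rule DERIV_nonneg_imp_nondecreasing[OF ts])
        fix x
        have "((\<lambda>x. f x * exp (C * x)) has_real_derivative
            (deriv f x * exp (C * x) + f x * (exp (C * x) * (C * 1)))) (at x)"
          by (auto intro!: derivative_eq_intros f1)
        moreover have "deriv f x * exp (C * x) + f x * (exp (C * x) * (C * 1)) \<ge> 0"
        proof -
          have "- C * f x \<le> deriv f x" using fd[of x] by simp
          then have "- C * f x * exp (C * x) \<le> deriv f x * exp (C * x)"
            by (rule mult_right_mono) simp
          then show ?thesis by (simp add: algebra_simps)
        qed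
        ultimately show "\<exists>y. ((\<lambda>x. f x * exp (C * x)) has_real_derivative y) (at x) \<and> y \<ge> 0"
          by blast
      qed
      then have le: "f t * exp (C * t) \<le> f s * exp (C * s)" .
      have "f t = f t * exp (C * t) * exp (- C * t)" by (simp add: mult.assoc flip: exp_add)
      also have "\<dots> \<le> f s * exp (C * s) * exp (- C * t)" by (rule mult_right_mono[OF le]) simp
      also have "\<dots> = f s * exp (C * s + - C * t)" by (simp add: mult.assoc flip: exp_add)
      also have "C * s + - C * t = C * \<bar>t - s\<bar>" using ts by (simp add: algebra_simps)
      finally show ?thesis .
    qed
  qed
  have both: "\<And>\<theta>1 \<theta>2. f \<theta>1 * exp (- C * s1_dist \<theta>1 \<theta>2) \<le> f \<theta>2
                 \<and> f \<theta>2 \<le> f \<theta>1 * exp (C * s1_dist \<theta>1 \<theta>2)"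
  proof -
    fix \<theta>1 \<theta>2 :: real
    define t where "t = \<theta>2 + of_int (round (\<theta>1 - \<theta>2))"
    have ft: "f t = f \<theta>2" unfolding t_def by (rule per_int[OF f_per])
    have d: "\<bar>t - \<theta>1\<bar> = s1_dist \<theta>1 \<theta>2" unfolding t_def s1_dist_def by linarith
    have a: "f \<theta>2 \<le> f \<theta>1 * exp (C * s1_dist \<theta>1 \<theta>2)" using grow[of t \<theta>1] ft d by simp
    have "f \<theta>1 \<le> f \<theta>2 * exp (C * s1_dist \<theta>1 \<theta>2)" using grow[of \<theta>1 t] ft d by (simp add: abs_minus_commute)
    then have "f \<theta>1 * exp (- C * s1_dist \<theta>1 \<theta>2) \<le> f \<theta>2 * exp (C * s1_dist \<theta>1 \<theta>2) * exp (- C * s1_dist \<theta>1 \<theta>2)"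
      by (rule mult_right_mono) simp
    also have "\<dots> = f \<theta>2" by (simp add: mult.assoc flip: exp_add)
    finally show "f \<theta>1 * exp (- C * s1_dist \<theta>1 \<theta>2) \<le> f \<theta>2 \<and> f \<theta>2 \<le> f \<theta>1 * exp (C * s1_dist \<theta>1 \<theta>2)"
      using a by simp
  qed
  have dhalf: "\<And>x y. s1_dist x y \<le> 1/2"
    unfolding s1_dist_def using of_int_round_abs_le by (simp add: abs_minus_commute)
  obtain xM where xM: "\<And>y. f y \<le> f xM" using per_max[OF f_per fc] by blast
  obtain xm where xm: "\<And>y. f xm \<le> f y" using per_min[OF f_per fc] by blast
  have SupF: "Sup (range f) = f xM" by (rule cSup_eq_maximum) (auto intro: xM)
  have InfF: "Inf (range f) = f xm" by (rule cInf_eq_minimum) (auto intro: xm)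
  have "integral {0..1} (\<lambda>x::real. f xm) \<le> integral {0..1} f"
    by (rule integral_le[OF integrable_const_ivl fi]) (simp add: xm)
  then have m1: "f xm \<le> 1" using f_mass by simp
  have "integral {0..1} f \<le> integral {0..1} (\<lambda>x::real. f xM)"
    by (rule integral_le[OF fi integrable_const_ivl]) (simp add: xM)
  then have M1: "1 \<le> f xM" using f_mass by simp
  have mpos: "f xm > 0"
  proof (rule ccontr)
    assume "\<not> f xm > 0"
    then have "f xm = 0" using f_nonneg[of xm] by simp
    then have "\<And>y. f y = 0" using grow f_nonneg by (metis mult_zero_left order_antisym)
    then have "f = (\<lambda>_. 0)" by auto
    then have "integral {0..1} f = 0" by simp
    then show False using f_mass by simp
  qed
  have eC: "exp (C * s1_dist xm xM) \<le> exp (C / 2)"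
  proof -
    have "C * s1_dist xm xM \<le> C * (1/2)" by (rule mult_left_mono[OF dhalf C0])
    then show ?thesis by simp
  qed
  have Mle: "f xM \<le> f xm * exp (C / 2)"
    using both[of xm xM] mult_left_mono[OF eC less_imp_le[OF mpos]] by linarith
  have eC2: "exp (- C / 2) \<le> exp (- C * s1_dist xM xm)"
  proof -
    have "C * s1_dist xM xm \<le> C * (1/2)" by (rule mult_left_mono[OF dhalf C0])
    then show ?thesis by simp
  qed
  have mge: "f xM * exp (- C / 2) \<le> f xm"
    using both[of xM xm] mult_left_mono[OF eC2 f_nonneg[of xM]] by linarith
  have P2: "(\<forall>\<theta>1 \<theta>2. f \<theta>1 * exp (- C * s1_dist \<theta>1 \<theta>2) \<le> f \<theta>2
                 \<and> f \<theta>2 \<le> f \<theta>1 * exp (C * s1_dist \<theta>1 \<theta>2))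
        \<and> Sup (range f) / Inf (range f) \<le> exp (C / 2)
        \<and> Sup (range f) \<le> exp (C / 2)
        \<and> Inf (range f) \<ge> exp (- C / 2)"
  proof (intro conjI)
    show "Sup (range f) / Inf (range f) \<le> exp (C / 2)"
      unfolding SupF InfF using Mle mpos by (simp add: divide_le_eq mult.commute)
    show "Sup (range f) \<le> exp (C / 2)"
    proof -
      have "f xm * exp (C / 2) \<le> exp (C / 2)" using mult_right_mono[OF m1 exp_ge_zero] by simp
      then show ?thesis unfolding SupF using Mle by linarith
    qed
    show "Inf (range f) \<ge> exp (- C / 2)"
    proof -
      have "exp (- C / 2) \<le> f xM * exp (- C / 2)" using mult_right_mono[OF M1 exp_ge_zero] by simp
      then show ?thesis unfolding InfF using mge by linarith
    qed
  qed (use both in blast)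
  have P3: "(\<forall>x. V differentiable (at x)) \<and> continuous_on UNIV (deriv V) \<longrightarrow>
        (\<forall>\<theta>. (\<forall>x. f x \<le> f \<theta>) \<longrightarrow>
              deriv (deriv f) \<theta> \<ge> - (Sup (range (deriv V)) / D) * f \<theta>)
      \<and> (\<forall>\<theta>. (\<forall>x. f \<theta> \<le> f x) \<longrightarrow>
              deriv (deriv f) \<theta> \<le> - (Inf (range (deriv V)) / D) * f \<theta>)"
  proof (intro impI)
    assume asm: "(\<forall>x. V differentiable (at x)) \<and> continuous_on UNIV (deriv V)"
    then have Vd: "\<forall>x. V differentiable (at x)" and V'c: "continuous_on UNIV (deriv V)" by auto
    have V1: "\<And>x. (V has_real_derivative deriv V x) (at x)"
      using Vd DERIV_deriv_iff_real_differentiable by blast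
    have V'per: "periodic1 (deriv V)" unfolding periodic1_def
    proof
      fix x
      have "((\<lambda>y. V (y + 1)) has_real_derivative deriv V (x + 1)) (at x)"
        using V1[of "x + 1"] DERIV_shift by blast
      moreover have "(\<lambda>y. V (y + 1)) = V" using V_per unfolding periodic1_def by auto
      ultimately have "(V has_real_derivative deriv V (x + 1)) (at x)" by simp
      then show "deriv V (x + 1) = deriv V x" using V1[of x] DERIV_unique by blast
    qed
    define M' where "M' = Sup (range (deriv V))"
    define m' where "m' = Inf (range (deriv V))"
    have V'M: "\<And>x. deriv V x \<le> M'" unfolding M'_def
      using per_bdd[OF V'per V'c] by (simp add: cSup_upper)
    have V'm: "\<And>x. m' \<le> deriv V x" unfolding m'_def
      using per_bdd[OF V'per V'c] by (simp add: cInf_lower)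
    have Vq: "\<And>a h. h \<noteq> 0 \<Longrightarrow> m' \<le> (V (a + h) - V a) / h \<and> (V (a + h) - V a) / h \<le> M'"
    proof -
      fix a h :: real assume h: "h \<noteq> 0"
      obtain z where z: "(V (a + h) - V a) / h = deriv V z"
      proof (cases "h > 0")
        case True
        have "\<exists>z. a < z \<and> z < a + h \<and> V (a + h) - V a = (a + h - a) * deriv V z"
          by (rule MVT2) (use True V1 in auto)
        then obtain z where "V (a + h) - V a = h * deriv V z" by auto
        then show thesis using that h by (simp add: field_simps)
      next
        case False
        then have lt: "a + h < a" using h by simp
        have "\<exists>z. a + h < z \<and> z < a \<and> V a - V (a + h) = (a - (a + h)) * deriv V z"
          by (rule MVT2) (use lt V1 in auto)
        then obtain z where "V a - V (a + h) = - h * deriv V z" by auto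
        then have "V (a + h) - V a = h * deriv V z" by simp
        then show thesis using that h by (simp add: field_simps)
      qed
      then show "m' \<le> (V (a + h) - V a) / h \<and> (V (a + h) - V a) / h \<le> M'"
        using V'M[of z] V'm[of z] by simp
    qed
    have gq: "\<And>\<theta> h. h \<noteq> 0 \<Longrightarrow> m' \<le> (g (\<theta> + h) - g \<theta>) / h \<and> (g (\<theta> + h) - g \<theta>) / h \<le> M'"
    proof -
      fix \<theta> h :: real assume h: "h \<noteq> 0"
      define q where "q \<psi> = (V (\<theta> - \<psi> + h) - V (\<theta> - \<psi>)) / h" for \<psi>
      have qc: "continuous_on UNIV (\<lambda>\<psi>. q \<psi> * f \<psi>)" unfolding q_def using h
        by (intro continuous_intros fc continuous_on_compose2[OF V_cont]) auto
      have qi: "(\<lambda>\<psi>. q \<psi> * f \<psi>) integrable_on {0..1}"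
        using qc continuous_on_subset integrable_continuous_interval by blast
      have "g (\<theta> + h) - g \<theta> = integral {0..1} (\<lambda>\<psi>. V (\<theta> + h - \<psi>) * f \<psi> - V (\<theta> - \<psi>) * f \<psi>)"
        unfolding g_def s1_conv_def by (simp add: integral_diff Vi)
      also have "(\<lambda>\<psi>. V (\<theta> + h - \<psi>) * f \<psi> - V (\<theta> - \<psi>) * f \<psi>) = (\<lambda>\<psi>. h * (q \<psi> * f \<psi>))"
        unfolding q_def using h by (auto simp: field_simps)
      finally have eq: "(g (\<theta> + h) - g \<theta>) / h = integral {0..1} (\<lambda>\<psi>. q \<psi> * f \<psi>)"
        using h by simp
      have qb: "\<And>\<psi>. m' \<le> q \<psi> \<and> q \<psi> \<le> M'" unfolding q_def using Vq[OF h] by blast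
      have "integral {0..1} (\<lambda>\<psi>. q \<psi> * f \<psi>) \<le> integral {0..1} (\<lambda>\<psi>. M' * f \<psi>)"
        by (rule integral_le[OF qi integrable_on_mult_right[OF fi]])
           (simp add: qb f_nonneg mult_right_mono)
      moreover have "integral {0..1} (\<lambda>\<psi>. m' * f \<psi>) \<le> integral {0..1} (\<lambda>\<psi>. q \<psi> * f \<psi>)"
        by (rule integral_le[OF integrable_on_mult_right[OF fi] qi])
           (simp add: qb f_nonneg mult_right_mono)
      ultimately show "m' \<le> (g (\<theta> + h) - g \<theta>) / h \<and> (g (\<theta> + h) - g \<theta>) / h \<le> M'"
        unfolding eq using f_mass by simp
    qed
    have Lf: "\<And>\<theta>. ((\<lambda>h. f (\<theta> + h)) \<longlongrightarrow> f \<theta>) (at 0)"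
    proof -
      fix \<theta>
      have "isCont f \<theta>" using DERIV_isCont[OF f1] .
      then show "((\<lambda>h. f (\<theta> + h)) \<longlongrightarrow> f \<theta>) (at 0)"
        unfolding isCont_def by (rule LIM_offset_zero)
    qed
    have evh: "\<And>P. (\<And>h::real. h \<noteq> 0 \<Longrightarrow> P h) \<Longrightarrow> eventually P (at 0)"
      unfolding eventually_at by (intro exI[of _ 1]) auto
    have A1: "\<forall>\<theta>. (\<forall>x. f x \<le> f \<theta>) \<longrightarrow> deriv (deriv f) \<theta> \<ge> - (Sup (range (deriv V)) / D) * f \<theta>"
    proof (intro allI impI)
      fix \<theta> assume mx: "\<forall>x. f x \<le> f \<theta>"
      have d0: "deriv f \<theta> = 0" by (rule DERIV_local_max[OF f1 zero_less_one]) (use mx in auto)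
      have fpos: "f \<theta> > 0" using mpos xm[of \<theta>] by linarith
      have g0: "g \<theta> = 0" using part1[of \<theta>] d0 fpos by simp
      have L1: "((\<lambda>h. (deriv f (\<theta> + h) - deriv f \<theta>) / h) \<longlongrightarrow> deriv (deriv f) \<theta>) (at 0)"
        using f2[of \<theta>] unfolding DERIV_def .
      have L2: "((\<lambda>h. - (M' / D) * f (\<theta> + h)) \<longlongrightarrow> - (M' / D) * f \<theta>) (at 0)"
        by (intro tendsto_mult_left Lf)
      have ev: "eventually (\<lambda>h. - (M' / D) * f (\<theta> + h) \<le> (deriv f (\<theta> + h) - deriv f \<theta>) / h) (at 0)"
      proof (rule evh)
        fix h :: real assume h: "h \<noteq> 0"
        have e1: "(deriv f (\<theta> + h) - deriv f \<theta>) / h = - (((g (\<theta> + h) - g \<theta>) / h) * f (\<theta> + h)) / D"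
          using part1[of "\<theta> + h"] d0 g0 D_pos h by (simp add: field_simps)
        have "((g (\<theta> + h) - g \<theta>) / h) * f (\<theta> + h) \<le> M' * f (\<theta> + h)"
          by (intro mult_right_mono f_nonneg) (use gq[OF h, of \<theta>] in auto)
        then show "- (M' / D) * f (\<theta> + h) \<le> (deriv f (\<theta> + h) - deriv f \<theta>) / h"
          unfolding e1 by (rule aux_le1[OF D_pos])
      qed
      have "- (M' / D) * f \<theta> \<le> deriv (deriv f) \<theta>" by (rule tendsto_le[OF _ L1 L2 ev]) simp
      then show "deriv (deriv f) \<theta> \<ge> - (Sup (range (deriv V)) / D) * f \<theta>" unfolding M'_def by simp
    qed
    have A2: "\<forall>\<theta>. (\<forall>x. f \<theta> \<le> f x) \<longrightarrow> deriv (deriv f) \<theta> \<le> - (Inf (range (deriv V)) / D) * f \<theta>"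
    proof (intro allI impI)
      fix \<theta> assume mn: "\<forall>x. f \<theta> \<le> f x"
      have d0: "deriv f \<theta> = 0" by (rule DERIV_local_min[OF f1 zero_less_one]) (use mn in auto)
      have fpos: "f \<theta> > 0" using mpos xm[of \<theta>] mn by (meson order.trans less_le_not_le not_le)
      have g0: "g \<theta> = 0" using part1[of \<theta>] d0 fpos by simp
      have L1: "((\<lambda>h. (deriv f (\<theta> + h) - deriv f \<theta>) / h) \<longlongrightarrow> deriv (deriv f) \<theta>) (at 0)"
        using f2[of \<theta>] unfolding DERIV_def .
      have L2: "((\<lambda>h. - (m' / D) * f (\<theta> + h)) \<longlongrightarrow> - (m' / D) * f \<theta>) (at 0)"
        by (intro tendsto_mult_left Lf)
      have ev: "eventually (\<lambda>h. (deriv f (\<theta> + h) - deriv f \<theta>) / h \<le> - (m' / D) * f (\<theta> + h)) (at 0)"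
      proof (rule evh)
        fix h :: real assume h: "h \<noteq> 0"
        have e1: "(deriv f (\<theta> + h) - deriv f \<theta>) / h = - (((g (\<theta> + h) - g \<theta>) / h) * f (\<theta> + h)) / D"
          using part1[of "\<theta> + h"] d0 g0 D_pos h by (simp add: field_simps)
        have "m' * f (\<theta> + h) \<le> ((g (\<theta> + h) - g \<theta>) / h) * f (\<theta> + h)"
          by (intro mult_right_mono f_nonneg) (use gq[OF h, of \<theta>] in auto)
        then show "(deriv f (\<theta> + h) - deriv f \<theta>) / h \<le> - (m' / D) * f (\<theta> + h)"
          unfolding e1 by (rule aux_le2[OF D_pos])
      qed
      have "deriv (deriv f) \<theta> \<le> - (m' / D) * f \<theta>" by (rule tendsto_le[OF _ L2 L1 ev]) simp
      then show "deriv (deriv f) \<theta> \<le> - (Inf (range (deriv V)) / D) * f \<theta>" unfolding m'_def by simp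
    qed
    show "(\<forall>\<theta>. (\<forall>x. f x \<le> f \<theta>) \<longrightarrow>
              deriv (deriv f) \<theta> \<ge> - (Sup (range (deriv V)) / D) * f \<theta>)
      \<and> (\<forall>\<theta>. (\<forall>x. f \<theta> \<le> f x) \<longrightarrow>
              deriv (deriv f) \<theta> \<le> - (Inf (range (deriv V)) / D) * f \<theta>)" using A1 A2 by blast
  qed
  show ?thesis
    unfolding Let_def M_def[symmetric] C_def[symmetric] g_def[symmetric]
    using part1 P2 P3 by blast
qed

end
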